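(* Let $K$ be a compact connected subgroup of $U(N)$ and $A\in\mathbb{C}^{N\times N}$. (a) The orbit $\mathcal{O}_K(A)$ is weakly rotationally symmetric if and only if $\mathcal{O}_K(A^\dagger)$ is weakly rotationally symmetric. (b) If $\mathcal{O}_K(A)$ is weakly rotationally symmetric, then so is $\mathcal{O}_K([[A,A^\dagger],A])$.
   Context: $\mathcal{O}_K(X)=\{UXU^\dagger\mid U\in K\}$; it is weakly rotationally symmetric if $e^{i\varphi}\mathcal{O}_K(X)=\mathcal{O}_K(X)$ for all $\varphi\in\mathbb{R}$. $[X,Y]=XY-YX$. *)

theory Defs
  imports "HOL-Analysis.Analysis"
begin

text \<open>Complex N x N matrices are represented as complex^'n^'n, with N = CARD('n).\<close>

definition cadj :: "complex^'n^'m \<Rightarrow> complex^'m^'n" where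
  "cadj A = (\<chi> i j. cnj (A $ j $ i))"

definition cscale :: "complex \<Rightarrow> complex^'n^'m \<Rightarrow> complex^'n^'m" where
  "cscale c A = (\<chi> i j. c * A $ i $ j)"

definition unitary_group :: "(complex^'n^'n) set" where
  "unitary_group = {U. U ** cadj U = mat 1 \<and> cadj U ** U = mat 1}"

definition is_subgroup_of_U :: "(complex^'n^'n) set \<Rightarrow> bool" where
  "is_subgroup_of_U K \<longleftrightarrow> K \<subseteq> unitary_group \<and> mat 1 \<in> K
     \<and> (\<forall>U\<in>K. \<forall>V\<in>K. U ** V \<in> K) \<and> (\<forall>U\<in>K. matrix_inv U \<in> K)"

definition orbit :: "(complex^'n^'n) set \<Rightarrow> complex^'n^'n \<Rightarrow> (complex^'n^'n) set" where
  "orbit K X = {U ** X ** cadj U | U. U \<in> K}"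

definition weakly_rot_sym :: "(complex^'n^'n) set \<Rightarrow> bool" where
  "weakly_rot_sym S \<longleftrightarrow> (\<forall>\<phi>::real. cscale (exp (\<i> * complex_of_real \<phi>)) ` S = S)"

definition commutator :: "complex^'n^'n \<Rightarrow> complex^'n^'n \<Rightarrow> complex^'n^'n" where
  "commutator X Y = X ** Y - Y ** X"

end

theory Submission
  imports Defs
begin

lemma cadj_cadj[simp]: "cadj (cadj A) = A"
  by (simp add: cadj_def vec_eq_iff)

lemma cadj_mult: "cadj (A ** B) = cadj B ** cadj A"
  by (simp add: cadj_def vec_eq_iff matrix_matrix_mult_def mult.commute)

lemma cadj_diff: "cadj (A - B) = cadj A - cadj B"
  by (simp add: cadj_def vec_eq_iff)

lemma cadj_cscale: "cadj (cscale c X) = cscale (cnj c) (cadj X)"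
  by (simp add: cadj_def cscale_def vec_eq_iff)

lemma cscale_mult_left: "cscale c A ** B = cscale c (A ** B)"
  by (simp add: cscale_def vec_eq_iff matrix_matrix_mult_def sum_distrib_left mult.assoc)

lemma cscale_mult_right: "A ** cscale c B = cscale c (A ** B)"
  by (simp add: cscale_def vec_eq_iff matrix_matrix_mult_def sum_distrib_left mult.assoc mult.left_commute)

lemma cscale_diff: "cscale c (A - B) = cscale c A - cscale c B"
  by (simp add: cscale_def vec_eq_iff algebra_simps)

lemma cscale_cscale: "cscale c (cscale d A) = cscale (c * d) A"
  by (simp add: cscale_def vec_eq_iff)

lemma cscale_1: "cscale 1 A = A"
  by (simp add: cscale_def vec_eq_iff)

lemma orbit_image:
  assumes "\<And>U X. U \<in> K \<Longrightarrow> g (U ** X ** cadj U) = U ** g X ** cadj U"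
  shows "orbit K (g A) = g ` orbit K A"
  unfolding orbit_def using assms by (auto simp: image_iff) (metis)

lemma wrs_image:
  assumes "\<And>\<phi>::real. \<exists>\<psi>::real. \<forall>X. cscale (exp (\<i> * complex_of_real \<phi>)) (g X)
              = g (cscale (exp (\<i> * complex_of_real \<psi>)) X)"
    and "weakly_rot_sym S"
  shows "weakly_rot_sym (g ` S)"
  unfolding weakly_rot_sym_def
proof
  fix \<phi> :: real
  obtain \<psi> where h: "\<forall>X. cscale (exp (\<i> * complex_of_real \<phi>)) (g X)
              = g (cscale (exp (\<i> * complex_of_real \<psi>)) X)" using assms(1) by blast
  have "cscale (exp (\<i> * complex_of_real \<phi>)) ` g ` S
      = g ` cscale (exp (\<i> * complex_of_real \<psi>)) ` S"
    using h by (simp add: image_image)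
  also have "\<dots> = g ` S" using assms(2) unfolding weakly_rot_sym_def by metis
  finally show "cscale (exp (\<i> * complex_of_real \<phi>)) ` g ` S = g ` S" .
qed

lemma cnj_exp_i: "cnj (exp (\<i> * complex_of_real \<phi>)) = exp (- (\<i> * complex_of_real \<phi>))"
  by (simp add: exp_cnj)

lemma cnj_exp_mi: "cnj (exp (- (\<i> * complex_of_real \<phi>))) = exp (\<i> * complex_of_real \<phi>)"
  by (simp add: exp_cnj)

lemma unit_exp: "cnj (exp (\<i> * complex_of_real \<phi>)) * exp (\<i> * complex_of_real \<phi>) = 1"
proof -
  have "cnj (exp (\<i> * complex_of_real \<phi>)) * exp (\<i> * complex_of_real \<phi>)
     = exp (\<i> * complex_of_real (- \<phi>) + \<i> * complex_of_real \<phi>)"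
    by (simp add: cnj_exp_i exp_add[symmetric])
  also have "\<dots> = 1" by simp
  finally show ?thesis .
qed

lemma wrs_cadj: "weakly_rot_sym S \<Longrightarrow> weakly_rot_sym (cadj ` S)"
proof (rule wrs_image)
  fix \<phi> :: real
  show "\<exists>\<psi>::real. \<forall>X. cscale (exp (\<i> * complex_of_real \<phi>)) (cadj X)
              = cadj (cscale (exp (\<i> * complex_of_real \<psi>)) X)"
    by (rule exI[of _ "-\<phi>"]) (simp add: cadj_cscale cnj_exp_i cnj_exp_mi)
qed

lemma comm_scale: "commutator (cscale a X) (cscale b Y) = cscale (a*b) (commutator X Y)"
  by (simp add: commutator_def cscale_mult_left cscale_mult_right cscale_cscale cscale_diff mult.commute)

definition ff :: "complex^'n^'n \<Rightarrow> complex^'n^'n" where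
  "ff X = commutator (commutator X (cadj X)) X"

lemma wrs_ff: "weakly_rot_sym S \<Longrightarrow> weakly_rot_sym (ff ` S)"
proof (rule wrs_image)
  fix \<phi> :: real
  let ?c = "exp (\<i> * complex_of_real \<phi>)"
  show "\<exists>\<psi>::real. \<forall>X. cscale ?c (ff X) = ff (cscale (exp (\<i> * complex_of_real \<psi>)) X)"
  proof (rule exI[of _ \<phi>], intro allI)
    fix X :: "complex^'n^'n"
    have u: "cnj ?c * ?c = 1" by (rule unit_exp)
    have u2: "?c * cnj ?c = 1" using u by (simp add: mult.commute)
    have "ff (cscale ?c X) = cscale ?c (ff X)"
      using comm_scale[of 1 "commutator X (cadj X)" ?c X]
      by (simp add: ff_def cadj_cscale comm_scale u2 cscale_1)
    then show "cscale ?c (ff X) = ff (cscale ?c X)" by simp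
  qed
qed

lemma conj_mult:
  assumes "cadj U ** U = mat 1"
  shows "(U ** X ** cadj U) ** (U ** Y ** cadj U) = U ** (X ** Y) ** cadj U"
proof -
  have "(U ** X ** cadj U) ** (U ** Y ** cadj U) = U ** X ** (cadj U ** U) ** Y ** cadj U"
    by (simp add: matrix_mul_assoc)
  also have "\<dots> = U ** (X ** Y) ** cadj U" using assms by (simp add: matrix_mul_assoc)
  finally show ?thesis .
qed

lemma mm_diff_l: "A ** (X - Y) = A ** X - A ** (Y::complex^_^_)"
  by (simp add: vec_eq_iff matrix_matrix_mult_def algebra_simps sum_subtractf)

lemma mm_diff_r: "(X - Y) ** A = X ** A - Y ** (A::complex^_^_)"
  by (simp add: vec_eq_iff matrix_matrix_mult_def algebra_simps sum_subtractf)

lemma conj_diff: "U ** (X - Y) ** cadj U = U ** X ** cadj U - U ** Y ** cadj U"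
  by (simp add: mm_diff_l mm_diff_r)

lemma conj_cadj: "cadj (U ** X ** cadj U) = U ** cadj X ** cadj U"
  by (simp add: cadj_mult matrix_mul_assoc)

lemma conj_comm:
  assumes "cadj U ** U = mat 1"
  shows "commutator (U ** X ** cadj U) (U ** Y ** cadj U) = U ** commutator X Y ** cadj U"
  using assms by (simp add: commutator_def conj_mult conj_diff)

theorem corollary2p25:
  fixes K :: "(complex^'n^'n) set" and A :: "complex^'n^'n"
  assumes "is_subgroup_of_U K" and "compact K" and "connected K"
  shows "(weakly_rot_sym (orbit K A) \<longleftrightarrow> weakly_rot_sym (orbit K (cadj A)))
    \<and> (weakly_rot_sym (orbit K A) \<longrightarrow>
         weakly_rot_sym (orbit K (commutator (commutator A (cadj A)) A)))"
proof -
  have un: "\<And>U. U \<in> K \<Longrightarrow> cadj U ** U = mat 1"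
    using assms(1) unfolding is_subgroup_of_U_def unitary_group_def by blast
  have oc: "\<And>B. orbit K (cadj B) = cadj ` orbit K B"
    by (rule orbit_image) (rule conj_cadj)
  have of: "orbit K (ff A) = ff ` orbit K A"
    by (rule orbit_image) (simp add: ff_def conj_comm conj_cadj un)
  have 1: "weakly_rot_sym (orbit K A) \<longleftrightarrow> weakly_rot_sym (orbit K (cadj A))"
  proof
    assume "weakly_rot_sym (orbit K A)"
    then show "weakly_rot_sym (orbit K (cadj A))" by (simp add: oc wrs_cadj)
  next
    assume "weakly_rot_sym (orbit K (cadj A))"
    then have "weakly_rot_sym (cadj ` orbit K (cadj A))" by (rule wrs_cadj)
    then show "weakly_rot_sym (orbit K A)" using oc[of "cadj A"] by simp
  qed
  show ?thesis using 1 of wrs_ff[of "orbit K A"] unfolding ff_def by simp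
qed

end
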